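(* Let $\gamma$ be a locally monotone Jordan curve with a continuous periodic parametrisation $\gamma:\mathbb{R}\to\mathbb{C}$ and local monotonicity constant $\mu$. Let $\varphi:\mathbb{R}\to\mathbb{R}_{\ge0}$ be smooth, supported in $[-1,1]$, with $\int_{\mathbb{R}}\varphi=1$, and for $\varepsilon>0$ set \[ \gamma_\varepsilon(s)=\int_{\mathbb{R}}\frac1\varepsilon\varphi\!\left(\frac u\varepsilon\right)\gamma(s-u)\,du . \] Let $\mu_\varepsilon$ be the local monotonicity constant of $\gamma_\varepsilon$ (which for sufficiently small $\varepsilon$ is a smooth locally monotone Jordan curve). Then $\liminf_{\varepsilon\to0}\mu_\varepsilon\ge\mu$.
   Context: Locally monotone: a Jordan curve with periodic parametrisation $\gamma$ is locally monotone if for every $\theta\in\mathbb{R}$ there are an open interval $U_\theta=(\theta_1,\theta_2)\ni\theta$ and a unit vector $v_\theta\in\mathbb{R}^2$ such that $g_{v_\theta}(s)=\gamma(s)\cdot v_\theta$ is strictly monotone on $U_\theta$. For such a pair put $\mu(\theta,v_\theta,U_\theta)=\min\{|g_{v_\theta}(\theta)-g_{v_\theta}(\theta_1)|,|g_{v_\theta}(\theta)-g_{v_\theta}(\theta_2)|\}$, let $\mu(\theta)$ be the maximal (supremal) value of $\mu(\theta,v_\theta,U_\theta)$ over all admissible pairs, and define the local monotonicity constant of $\gamma$ as $\mu=\min_{\theta\in\mathbb{R}}\mu(\theta)$ (infimum). *)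

theory Defs
  imports "HOL-Analysis.Analysis"
begin

definition periodic_jordan_param :: "(real \<Rightarrow> complex) \<Rightarrow> bool" where
  "periodic_jordan_param \<gamma> \<longleftrightarrow> continuous_on UNIV \<gamma> \<and>
     (\<exists>T>0. (\<forall>s. \<gamma> (s + T) = \<gamma> s) \<and> inj_on \<gamma> {0..<T})"

definition gproj :: "(real \<Rightarrow> complex) \<Rightarrow> complex \<Rightarrow> real \<Rightarrow> real" where
  "gproj \<gamma> v s = \<gamma> s \<bullet> v"

definition strictly_monotone_on :: "real set \<Rightarrow> (real \<Rightarrow> real) \<Rightarrow> bool" where
  "strictly_monotone_on U g \<longleftrightarrow>
     (\<forall>x\<in>U. \<forall>y\<in>U. x < y \<longrightarrow> g x < g y) \<or> (\<forall>x\<in>U. \<forall>y\<in>U. x < y \<longrightarrow> g x > g y)"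

definition admissible :: "(real \<Rightarrow> complex) \<Rightarrow> real \<Rightarrow> complex \<Rightarrow> real \<Rightarrow> real \<Rightarrow> bool" where
  "admissible \<gamma> \<theta> v t1 t2 \<longleftrightarrow> t1 < \<theta> \<and> \<theta> < t2 \<and> norm v = 1 \<and>
     strictly_monotone_on {t1<..<t2} (gproj \<gamma> v)"

definition locally_monotone :: "(real \<Rightarrow> complex) \<Rightarrow> bool" where
  "locally_monotone \<gamma> \<longleftrightarrow> (\<forall>\<theta>. \<exists>v t1 t2. admissible \<gamma> \<theta> v t1 t2)"

definition mu_pair :: "(real \<Rightarrow> complex) \<Rightarrow> real \<Rightarrow> complex \<Rightarrow> real \<Rightarrow> real \<Rightarrow> real" where
  "mu_pair \<gamma> \<theta> v t1 t2 =
     min \<bar>gproj \<gamma> v \<theta> - gproj \<gamma> v t1\<bar> \<bar>gproj \<gamma> v \<theta> - gproj \<gamma> v t2\<bar>"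

text \<open>mu(theta): supremum over admissible pairs (extended reals; -\<infinity> if there is none).\<close>
definition mu_at :: "(real \<Rightarrow> complex) \<Rightarrow> real \<Rightarrow> ereal" where
  "mu_at \<gamma> \<theta> = (SUP p \<in> {(v, t1, t2). admissible \<gamma> \<theta> v t1 t2}.
                    ereal (case p of (v, t1, t2) \<Rightarrow> mu_pair \<gamma> \<theta> v t1 t2))"

definition lm_const :: "(real \<Rightarrow> complex) \<Rightarrow> ereal" where
  "lm_const \<gamma> = (INF \<theta>. mu_at \<gamma> \<theta>)"

definition smooth_fun :: "(real \<Rightarrow> real) \<Rightarrow> bool" where
  "smooth_fun f \<longleftrightarrow> (\<forall>n x. ((deriv ^^ n) f) differentiable (at x))"

definition mollify :: "(real \<Rightarrow> real) \<Rightarrow> real \<Rightarrow> (real \<Rightarrow> complex) \<Rightarrow> real \<Rightarrow> complex" where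
  "mollify \<phi> \<epsilon> \<gamma> s = integral UNIV (\<lambda>u. ((1 / \<epsilon>) * \<phi> (u / \<epsilon>)) *\<^sub>R \<gamma> (s - u))"

end

theory Submission
  imports Defs
begin

lemma per_nat:
  assumes "\<And>s. f (s + T) = f s"
  shows "f (s + real n * T) = f s"
proof (induction n arbitrary: s)
  case 0 then show ?case by simp
next
  case (Suc n)
  have "f (s + real (Suc n) * T) = f ((s + real n * T) + T)" by (simp add: algebra_simps)
  also have "\<dots> = f s" using assms Suc by simp
  finally show ?case .
qed

lemma per_int:
  assumes "\<And>s. f (s + T) = f s"
  shows "f (s + real_of_int k * T) = f s"
proof (cases "k \<ge> 0")
  case True
  then obtain n where "k = int n" by (metis nonneg_eq_int)
  then show ?thesis using per_nat[of f T, OF assms] by simp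
next
  case False
  then obtain n where n: "k = - int n" by (metis minus_minus neg_0_le_iff_le nonneg_eq_int nle_le)
  have "f s = f ((s - real n * T) + real n * T)" by simp
  also have "\<dots> = f (s - real n * T)" using per_nat[of f T, OF assms] by blast
  finally show ?thesis using n by simp
qed

lemma per_reduce:
  assumes "T > 0"
  obtains k :: int and x' where "x = x' + real_of_int k * T" "x' \<in> {0..<T}"
proof -
  define k where "k = \<lfloor>x / T\<rfloor>"
  have "real_of_int k \<le> x / T" "x / T < real_of_int k + 1" unfolding k_def by linarith+
  then have "real_of_int k * T \<le> x" "x < real_of_int k * T + T" using assms
    by (auto simp: field_simps)
  then show ?thesis using that[of "x - real_of_int k * T" k] by auto
qed

lemma unif_cont_periodic:
  fixes \<gamma> :: "real \<Rightarrow> complex"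
  assumes c: "continuous_on UNIV \<gamma>" and T: "T > 0" and p: "\<And>s. \<gamma> (s + T) = \<gamma> s"
    and e: "e > 0"
  shows "\<exists>d>0. \<forall>x u. \<bar>u\<bar> \<le> d \<longrightarrow> norm (\<gamma> (x - u) - \<gamma> x) < e"
proof -
  have "uniformly_continuous_on {-1..T+1} \<gamma>"
    by (rule compact_uniformly_continuous) (auto intro: continuous_on_subset[OF c])
  then obtain d where d: "d > 0" and
    dd: "\<And>x x'. x \<in> {-1..T+1} \<Longrightarrow> x' \<in> {-1..T+1} \<Longrightarrow> dist x' x < d \<Longrightarrow> dist (\<gamma> x') (\<gamma> x) < e"
    unfolding uniformly_continuous_on_def using e by metis
  show ?thesis
  proof (intro exI[of _ "min (d/2) (1/2)"] conjI allI impI)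
    fix x u :: real assume u: "\<bar>u\<bar> \<le> min (d/2) (1/2)"
    obtain k x' where x: "x = x' + real_of_int k * T" "x' \<in> {0..<T}" using per_reduce[OF T] by blast
    have "\<gamma> x = \<gamma> x'" using per_int[of \<gamma> T x' k] p x by simp
    moreover have "\<gamma> (x - u) = \<gamma> (x' - u)" using per_int[of \<gamma> T "x' - u" k] p x
      by (simp add: algebra_simps)
    moreover have "dist (\<gamma> (x' - u)) (\<gamma> x') < e"
      using x u d by (intro dd) (auto simp: dist_real_def)
    ultimately show "norm (\<gamma> (x - u) - \<gamma> x) < e" by (simp add: dist_norm)
  qed (use d in auto)
qed

lemma phi_cont_comp:
  assumes "continuous_on UNIV (\<phi>::real\<Rightarrow>real)" "\<epsilon> > 0"
  shows "continuous_on S (\<lambda>u. (1 / \<epsilon>) * \<phi> (u / \<epsilon>))"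
  using assms(2) by (intro continuous_intros continuous_on_compose2[OF assms(1), of S "\<lambda>u. u / \<epsilon>"]) auto

lemma kernel_integral:
  fixes \<phi> :: "real \<Rightarrow> real"
  assumes c: "continuous_on UNIV \<phi>" and z: "\<And>x. \<bar>x\<bar> > 1 \<Longrightarrow> \<phi> x = 0"
    and i: "(\<phi> has_integral 1) UNIV" and e: "\<epsilon> > 0"
  shows "((\<lambda>u. (1 / \<epsilon>) * \<phi> (u / \<epsilon>)) has_integral 1) {-\<epsilon>..\<epsilon>}"
proof -
  have "\<phi> = (\<lambda>x. if x \<in> {-1..1} then \<phi> x else 0)" using z by (auto simp: fun_eq_iff abs_if)
  then have "integral UNIV \<phi> = integral {-1..1} \<phi>"
    by (metis integral_restrict_UNIV)
  moreover have "\<phi> integrable_on {-1..1}" by (rule integrable_continuous_real) (auto intro: continuous_on_subset[OF c])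
  ultimately have h1: "(\<phi> has_integral 1) {-1..1}" using i
    by (metis has_integral_integrable_integral integral_unique)
  have h2: "((\<lambda>x. \<phi> ((1/\<epsilon>) * x)) has_integral (1 / \<bar>1/\<epsilon>\<bar>) *\<^sub>R 1) ((\<lambda>x. x / (1/\<epsilon>)) ` {-1..1})"
    by (rule has_integral_stretch_real[OF h1]) (use e in auto)
  have im: "(\<lambda>x. x / (1/\<epsilon>)) ` {-1..1} = {-\<epsilon>..\<epsilon>}"
  proof -
    have "(\<lambda>x. x / (1/\<epsilon>)) ` {-1..1} = (*) \<epsilon> ` {-1..1}" by (rule image_cong) auto
    also have "\<dots> = {-\<epsilon>..\<epsilon>}" using e by (simp add: image_mult_atLeastAtMost)
    finally show ?thesis .
  qed
  have h3: "((\<lambda>x. \<phi> (x / \<epsilon>)) has_integral \<epsilon>) {-\<epsilon>..\<epsilon>}"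
    using h2 e unfolding im by (simp add: field_simps)
  show ?thesis using has_integral_mult_right[OF h3, of "1/\<epsilon>"] e by simp
qed

lemma mollify_eq:
  fixes \<phi> :: "real \<Rightarrow> real"
  assumes z: "\<And>x. \<bar>x\<bar> > 1 \<Longrightarrow> \<phi> x = 0" and e: "\<epsilon> > 0"
  shows "mollify \<phi> \<epsilon> \<gamma> s = integral {-\<epsilon>..\<epsilon>} (\<lambda>u. ((1 / \<epsilon>) * \<phi> (u / \<epsilon>)) *\<^sub>R \<gamma> (s - u))"
proof -
  have eq: "(\<lambda>u. ((1 / \<epsilon>) * \<phi> (u / \<epsilon>)) *\<^sub>R \<gamma> (s - u)) =
     (\<lambda>u. if u \<in> {-\<epsilon>..\<epsilon>} then ((1 / \<epsilon>) * \<phi> (u / \<epsilon>)) *\<^sub>R \<gamma> (s - u) else 0)"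
  proof
    fix u
    show "((1 / \<epsilon>) * \<phi> (u / \<epsilon>)) *\<^sub>R \<gamma> (s - u) =
     (if u \<in> {-\<epsilon>..\<epsilon>} then ((1 / \<epsilon>) * \<phi> (u / \<epsilon>)) *\<^sub>R \<gamma> (s - u) else 0)"
    proof (cases "u \<in> {-\<epsilon>..\<epsilon>}")
      case False
      then have "\<bar>u\<bar> > \<epsilon>" by auto
      then have "\<bar>u\<bar> / \<epsilon> > 1" using e by simp
      then have "\<bar>u / \<epsilon>\<bar> > 1" using e by (simp add: abs_divide)
      then have "\<phi> (u / \<epsilon>) = 0" by (rule z)
      then show ?thesis using False by simp
    next
      case True
      then show ?thesis by (simp only: if_True)
    qed
  qed
  show ?thesis unfolding mollify_def by (subst eq) (rule integral_restrict_UNIV)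
qed

lemma kernel_pos:
  fixes \<phi> :: "real \<Rightarrow> real"
  assumes z: "\<And>x. \<bar>x\<bar> > 1 \<Longrightarrow> \<phi> x = 0" and nn: "\<And>x. \<phi> x \<ge> 0"
    and i: "(\<phi> has_integral 1) UNIV" and e: "\<epsilon> > 0"
  shows "\<exists>u0\<in>{-\<epsilon>..\<epsilon>}. (1 / \<epsilon>) * \<phi> (u0 / \<epsilon>) > 0"
proof -
  have "\<exists>x. \<phi> x \<noteq> 0"
  proof (rule ccontr)
    assume "\<not> ?thesis"
    then have "\<phi> = (\<lambda>x. 0)" by auto
    then show False using i by (metis has_integral_0 has_integral_unique zero_neq_one)
  qed
  then obtain x where x: "\<phi> x \<noteq> 0" by blast
  have "\<bar>x\<bar> \<le> 1"
  proof (rule ccontr)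
    assume "\<not> \<bar>x\<bar> \<le> 1" then show False using z[of x] x by simp
  qed
  then have "-1 \<le> x" "x \<le> 1" by arith+
  then have "\<epsilon> * -1 \<le> \<epsilon> * x" "\<epsilon> * x \<le> \<epsilon> * 1" using e by (intro mult_left_mono; simp)+
  then have "\<epsilon> * x \<in> {-\<epsilon>..\<epsilon>}" by simp
  moreover have "(1 / \<epsilon>) * \<phi> (\<epsilon> * x / \<epsilon>) > 0" using e x nn[of x] by auto
  ultimately show ?thesis by blast
qed

lemma cont_shift:
  assumes "continuous_on UNIV (\<gamma>::real \<Rightarrow> complex)"
  shows "continuous_on S (\<lambda>u. \<gamma> (s - u))"
  by (intro continuous_on_compose2[OF assms, of S "\<lambda>u. s - u"] continuous_intros) auto

lemma moll_integrable:
  assumes c\<phi>: "continuous_on UNIV (\<phi>::real\<Rightarrow>real)" and e: "\<epsilon> > 0"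
    and c\<gamma>: "continuous_on UNIV (\<gamma>::real \<Rightarrow> complex)"
  shows "(\<lambda>u. ((1 / \<epsilon>) * \<phi> (u / \<epsilon>)) *\<^sub>R \<gamma> (s - u)) integrable_on {a..b}"
  by (intro integrable_continuous_real continuous_intros phi_cont_comp[OF c\<phi> e] cont_shift[OF c\<gamma>])

lemma moll_est:
  fixes \<phi> :: "real \<Rightarrow> real" and \<gamma> :: "real \<Rightarrow> complex"
  assumes c\<phi>: "continuous_on UNIV \<phi>" and z: "\<And>x. \<bar>x\<bar> > 1 \<Longrightarrow> \<phi> x = 0"
    and nn: "\<And>x. \<phi> x \<ge> 0"
    and i: "(\<phi> has_integral 1) UNIV" and e: "\<epsilon> > 0"
    and c\<gamma>: "continuous_on UNIV \<gamma>"
    and d: "\<And>u. \<bar>u\<bar> \<le> \<epsilon> \<Longrightarrow> norm (\<gamma> (s - u) - \<gamma> s) < \<delta>"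
  shows "norm (mollify \<phi> \<epsilon> \<gamma> s - \<gamma> s) \<le> \<delta>"
proof -
  define k where "k u = (1 / \<epsilon>) * \<phi> (u / \<epsilon>)" for u
  have Ik: "(k has_integral 1) {-\<epsilon>..\<epsilon>}" unfolding k_def by (rule kernel_integral[OF c\<phi> z i e])
  have kn: "k u \<ge> 0" for u unfolding k_def using nn[of "u/\<epsilon>"] e by simp
  have I1: "((\<lambda>u. k u *\<^sub>R \<gamma> (s - u)) has_integral mollify \<phi> \<epsilon> \<gamma> s) {-\<epsilon>..\<epsilon>}" for s
  proof -
    have "mollify \<phi> \<epsilon> \<gamma> s = integral {-\<epsilon>..\<epsilon>} (\<lambda>u. k u *\<^sub>R \<gamma> (s - u))"
      unfolding k_def by (rule mollify_eq[OF z e])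
    moreover have "(\<lambda>u. k u *\<^sub>R \<gamma> (s - u)) integrable_on {-\<epsilon>..\<epsilon>}"
      unfolding k_def by (rule moll_integrable[OF c\<phi> e c\<gamma>])
    ultimately show ?thesis by (metis integrable_integral)
  qed
  have I2: "((\<lambda>u. k u *\<^sub>R \<gamma> s) has_integral \<gamma> s) {-\<epsilon>..\<epsilon>}"
    using has_integral_scaleR_left[OF Ik, of "\<gamma> s"] by simp
  have I3: "((\<lambda>u. k u *\<^sub>R (\<gamma> (s - u) - \<gamma> s)) has_integral (mollify \<phi> \<epsilon> \<gamma> s - \<gamma> s)) {-\<epsilon>..\<epsilon>}"
    using has_integral_diff[OF I1 I2] by (simp add: scaleR_diff_right)
  have I4: "((\<lambda>u. k u * \<delta>) has_integral \<delta>) {-\<epsilon>..\<epsilon>}"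
    using has_integral_mult_left[OF Ik, of \<delta>] by simp
  have "norm (integral {-\<epsilon>..\<epsilon>} (\<lambda>u. k u *\<^sub>R (\<gamma> (s - u) - \<gamma> s))) \<le> integral {-\<epsilon>..\<epsilon>} (\<lambda>u. k u * \<delta>)"
  proof (rule integral_norm_bound_integral)
    show "(\<lambda>u. k u *\<^sub>R (\<gamma> (s - u) - \<gamma> s)) integrable_on {-\<epsilon>..\<epsilon>}" using I3 by blast
    show "(\<lambda>u. k u * \<delta>) integrable_on {-\<epsilon>..\<epsilon>}" using I4 by blast
    fix u assume u: "u \<in> {-\<epsilon>..\<epsilon>}"
    then have "\<bar>u\<bar> \<le> \<epsilon>" by auto
    then have "norm (\<gamma> (s - u) - \<gamma> s) \<le> \<delta>" using d by (simp add: less_imp_le)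
    then show "norm (k u *\<^sub>R (\<gamma> (s - u) - \<gamma> s)) \<le> k u * \<delta>"
      using kn[of u] by (simp add: mult_left_mono)
  qed
  moreover have "integral {-\<epsilon>..\<epsilon>} (\<lambda>u. k u *\<^sub>R (\<gamma> (s - u) - \<gamma> s)) = mollify \<phi> \<epsilon> \<gamma> s - \<gamma> s"
    using I3 by (rule integral_unique)
  moreover have "integral {-\<epsilon>..\<epsilon>} (\<lambda>u. k u * \<delta>) = \<delta>"
    using I4 by (rule integral_unique)
  ultimately show ?thesis by metis
qed

lemma moll_mono_inc:
  fixes \<phi> :: "real \<Rightarrow> real" and \<gamma> :: "real \<Rightarrow> complex"
  assumes c\<phi>: "continuous_on UNIV \<phi>" and z: "\<And>x. \<bar>x\<bar> > 1 \<Longrightarrow> \<phi> x = 0"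
    and nn: "\<And>x. \<phi> x \<ge> 0"
    and i: "(\<phi> has_integral 1) UNIV" and e: "\<epsilon> > 0"
    and c\<gamma>: "continuous_on UNIV \<gamma>"
    and G: "\<forall>x\<in>{t1<..<t2}. \<forall>y\<in>{t1<..<t2}. x < y \<longrightarrow> \<gamma> x \<bullet> v < \<gamma> y \<bullet> v"
    and x: "x \<in> {t1+\<epsilon><..<t2-\<epsilon>}" and y: "y \<in> {t1+\<epsilon><..<t2-\<epsilon>}" and xy: "x < y"
  shows "mollify \<phi> \<epsilon> \<gamma> x \<bullet> v < mollify \<phi> \<epsilon> \<gamma> y \<bullet> v"
proof -
  define k where "k u = (1 / \<epsilon>) * \<phi> (u / \<epsilon>)" for u
  have kn: "k u \<ge> 0" for u unfolding k_def using nn[of "u/\<epsilon>"] e by simp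
  have I1: "((\<lambda>u. k u *\<^sub>R \<gamma> (s - u)) has_integral mollify \<phi> \<epsilon> \<gamma> s) {-\<epsilon>..\<epsilon>}" for s
  proof -
    have "mollify \<phi> \<epsilon> \<gamma> s = integral {-\<epsilon>..\<epsilon>} (\<lambda>u. k u *\<^sub>R \<gamma> (s - u))"
      unfolding k_def by (rule mollify_eq[OF z e])
    moreover have "(\<lambda>u. k u *\<^sub>R \<gamma> (s - u)) integrable_on {-\<epsilon>..\<epsilon>}"
      unfolding k_def by (rule moll_integrable[OF c\<phi> e c\<gamma>])
    ultimately show ?thesis by (metis integrable_integral)
  qed
  obtain u0 where u0: "u0 \<in> {-\<epsilon>..\<epsilon>}" "k u0 > 0" using kernel_pos[OF z nn i e] unfolding k_def by blast
  have Ii: "((\<lambda>u. k u * (\<gamma> (s - u) \<bullet> v)) has_integral (mollify \<phi> \<epsilon> \<gamma> s \<bullet> v)) {-\<epsilon>..\<epsilon>}" for s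
  proof -
    from has_integral_linear[OF I1[of s] bounded_linear_inner_left[of v]]
    show ?thesis by (simp add: comp_def)
  qed
  define H where "H u = k u * (\<gamma> (y - u) \<bullet> v - \<gamma> (x - u) \<bullet> v)" for u
  have IH: "(H has_integral (mollify \<phi> \<epsilon> \<gamma> y \<bullet> v - mollify \<phi> \<epsilon> \<gamma> x \<bullet> v)) {-\<epsilon>..\<epsilon>}"
    unfolding H_def using has_integral_diff[OF Ii[of y] Ii[of x]] by (simp add: right_diff_distrib)
  have Hpos: "H u \<ge> 0" if "u \<in> {-\<epsilon>..\<epsilon>}" for u
  proof -
    have "x - u \<in> {t1<..<t2}" "y - u \<in> {t1<..<t2}" "x - u < y - u" using that x y xy by auto
    then have "\<gamma> (x - u) \<bullet> v < \<gamma> (y - u) \<bullet> v" using G by blast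
    then show ?thesis unfolding H_def using kn[of u] by simp
  qed
  have Hu0: "H u0 > 0"
  proof -
    have "x - u0 \<in> {t1<..<t2}" "y - u0 \<in> {t1<..<t2}" "x - u0 < y - u0" using u0 x y xy by auto
    then have "\<gamma> (x - u0) \<bullet> v < \<gamma> (y - u0) \<bullet> v" using G by blast
    then show ?thesis unfolding H_def using u0 by simp
  qed
  have Hc: "continuous_on {-\<epsilon>..\<epsilon>} H"
    unfolding H_def k_def
    by (intro continuous_intros phi_cont_comp[OF c\<phi> e] cont_shift[OF c\<gamma>])
  have "mollify \<phi> \<epsilon> \<gamma> y \<bullet> v - mollify \<phi> \<epsilon> \<gamma> x \<bullet> v \<ge> 0"
    using has_integral_nonneg[OF IH] Hpos by blast
  moreover have "mollify \<phi> \<epsilon> \<gamma> y \<bullet> v - mollify \<phi> \<epsilon> \<gamma> x \<bullet> v \<noteq> 0"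
  proof
    assume h0: "mollify \<phi> \<epsilon> \<gamma> y \<bullet> v - mollify \<phi> \<epsilon> \<gamma> x \<bullet> v = 0"
    have "H u0 = 0"
      by (rule has_integral_0_cbox_imp_0[of "-\<epsilon>" \<epsilon> H]) (use Hc Hpos IH h0 u0 e in auto)
    then show False using Hu0 by simp
  qed
  ultimately show ?thesis by linarith
qed

lemma moll_smono:
  fixes \<phi> :: "real \<Rightarrow> real" and \<gamma> :: "real \<Rightarrow> complex"
  assumes c\<phi>: "continuous_on UNIV \<phi>" and z: "\<And>x. \<bar>x\<bar> > 1 \<Longrightarrow> \<phi> x = 0"
    and nn: "\<And>x. \<phi> x \<ge> 0"
    and i: "(\<phi> has_integral 1) UNIV" and e: "\<epsilon> > 0"
    and c\<gamma>: "continuous_on UNIV \<gamma>"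
    and sm: "strictly_monotone_on {t1<..<t2} (gproj \<gamma> v)"
  shows "strictly_monotone_on {t1+\<epsilon><..<t2-\<epsilon>} (gproj (mollify \<phi> \<epsilon> \<gamma>) v)"
proof -
  from sm have "(\<forall>x\<in>{t1<..<t2}. \<forall>y\<in>{t1<..<t2}. x < y \<longrightarrow> \<gamma> x \<bullet> v < \<gamma> y \<bullet> v) \<or>
     (\<forall>x\<in>{t1<..<t2}. \<forall>y\<in>{t1<..<t2}. x < y \<longrightarrow> \<gamma> x \<bullet> (-v) < \<gamma> y \<bullet> (-v))"
    unfolding strictly_monotone_on_def gproj_def by (simp add: inner_minus_right)
  then show ?thesis
  proof
    assume G: "\<forall>x\<in>{t1<..<t2}. \<forall>y\<in>{t1<..<t2}. x < y \<longrightarrow> \<gamma> x \<bullet> v < \<gamma> y \<bullet> v"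
    have "\<forall>x\<in>{t1+\<epsilon><..<t2-\<epsilon>}. \<forall>y\<in>{t1+\<epsilon><..<t2-\<epsilon>}. x < y \<longrightarrow>
       mollify \<phi> \<epsilon> \<gamma> x \<bullet> v < mollify \<phi> \<epsilon> \<gamma> y \<bullet> v"
      using moll_mono_inc[OF c\<phi> z nn i e c\<gamma> G] by blast
    then show ?thesis unfolding strictly_monotone_on_def gproj_def by blast
  next
    assume G: "\<forall>x\<in>{t1<..<t2}. \<forall>y\<in>{t1<..<t2}. x < y \<longrightarrow> \<gamma> x \<bullet> (-v) < \<gamma> y \<bullet> (-v)"
    have "\<forall>x\<in>{t1+\<epsilon><..<t2-\<epsilon>}. \<forall>y\<in>{t1+\<epsilon><..<t2-\<epsilon>}. x < y \<longrightarrow>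
       mollify \<phi> \<epsilon> \<gamma> x \<bullet> (-v) < mollify \<phi> \<epsilon> \<gamma> y \<bullet> (-v)"
      using moll_mono_inc[OF c\<phi> z nn i e c\<gamma> G] by blast
    then show ?thesis unfolding strictly_monotone_on_def gproj_def by (simp add: inner_minus_right)
  qed
qed

lemma sm_far:
  assumes sm: "strictly_monotone_on {t1<..<t2} g"
    and p: "p \<in> {t1<..<t2}" and q: "q \<in> {t1<..<t2}" and r: "r \<in> {t1<..<t2}"
    and pq: "p < q" and qr: "q < r"
  shows "\<bar>g r - g q\<bar> \<le> \<bar>g r - g p\<bar>" "\<bar>g p - g q\<bar> \<le> \<bar>g p - g r\<bar>"
proof -
  from sm have "(g p < g q \<and> g q < g r) \<or> (g p > g q \<and> g q > g r)"
    unfolding strictly_monotone_on_def using p q r pq qr by blast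
  then show "\<bar>g r - g q\<bar> \<le> \<bar>g r - g p\<bar>" "\<bar>g p - g q\<bar> \<le> \<bar>g p - g r\<bar>" by arith+
qed

definition goodQ :: "(real \<Rightarrow> complex) \<Rightarrow> real \<Rightarrow> real \<Rightarrow> real \<Rightarrow> bool" where
  "goodQ \<gamma> y1 \<theta> r \<longleftrightarrow> (\<exists>v t1 t2 a b. admissible \<gamma> \<theta> v t1 t2 \<and> t1 + r \<le> a \<and> a + r \<le> \<theta> \<and>
     \<theta> + r \<le> b \<and> b + r \<le> t2 \<and> y1 < \<bar>gproj \<gamma> v \<theta> - gproj \<gamma> v a\<bar> \<and>
     y1 < \<bar>gproj \<gamma> v \<theta> - gproj \<gamma> v b\<bar>)"

lemma goodQ_mono: "goodQ \<gamma> y1 \<theta> r \<Longrightarrow> r' \<le> r \<Longrightarrow> goodQ \<gamma> y1 \<theta> r'"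
  unfolding goodQ_def by (meson add_le_cancel_left order_trans add_mono order_refl) 

lemma goodQ_shift:
  assumes p: "\<And>s. \<gamma> (s + c) = \<gamma> s" and q: "goodQ \<gamma> y1 \<theta> r"
  shows "goodQ \<gamma> y1 (\<theta> + c) r"
proof -
  obtain v t1 t2 a b where A: "admissible \<gamma> \<theta> v t1 t2" and
    B: "t1 + r \<le> a" "a + r \<le> \<theta>" "\<theta> + r \<le> b" "b + r \<le> t2"
    "y1 < \<bar>gproj \<gamma> v \<theta> - gproj \<gamma> v a\<bar>" "y1 < \<bar>gproj \<gamma> v \<theta> - gproj \<gamma> v b\<bar>"
    using q unfolding goodQ_def by blast
  have g: "gproj \<gamma> v (x + c) = gproj \<gamma> v x" for x unfolding gproj_def using p by simp
  have g': "gproj \<gamma> v x = gproj \<gamma> v (x - c)" for x using g[of "x - c"] by simp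
  have "strictly_monotone_on {t1 + c<..<t2 + c} (gproj \<gamma> v)"
  proof -
    have sm: "strictly_monotone_on {t1<..<t2} (gproj \<gamma> v)" using A unfolding admissible_def by blast
    have m: "x \<in> {t1 + c<..<t2 + c} \<longleftrightarrow> x - c \<in> {t1<..<t2}" for x by auto
    show ?thesis using sm unfolding strictly_monotone_on_def
      by (smt (verit, ccfv_threshold) g' m)
  qed
  then have "admissible \<gamma> (\<theta> + c) v (t1 + c) (t2 + c)" using A unfolding admissible_def by auto
  then show ?thesis unfolding goodQ_def using B
    by (intro exI[of _ v] exI[of _ "t1 + c"] exI[of _ "t2 + c"] exI[of _ "a + c"] exI[of _ "b + c"]) (auto simp: g)
qed

lemma cont_eps:
  fixes g :: "real \<Rightarrow> real"
  assumes "isCont g x0" "e > 0"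
  obtains d where "d > 0" "\<And>x. \<bar>x - x0\<bar> < d \<Longrightarrow> \<bar>g x - g x0\<bar> < e"
  using assms unfolding continuous_at_eps_delta dist_real_def by metis

lemma goodQ_local:
  fixes \<gamma> :: "real \<Rightarrow> complex"
  assumes c\<gamma>: "continuous_on UNIV \<gamma>" and lt: "ereal y1 < mu_at \<gamma> \<theta>0"
  shows "\<exists>r>0. \<forall>\<theta>. \<bar>\<theta> - \<theta>0\<bar> < r \<longrightarrow> goodQ \<gamma> y1 \<theta> r"
proof -
  obtain v t1 t2 where A: "admissible \<gamma> \<theta>0 v t1 t2" and m: "y1 < mu_pair \<gamma> \<theta>0 v t1 t2"
    using lt unfolding mu_at_def less_SUP_iff by auto
  define g where "g = gproj \<gamma> v"
  have gc: "isCont g x" for x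
  proof -
    have "isCont \<gamma> x" using c\<gamma> by (simp add: continuous_on_eq_continuous_at)
    then show ?thesis unfolding g_def gproj_def by (intro continuous_intros)
  qed
  have o: "t1 < \<theta>0" "\<theta>0 < t2" using A unfolding admissible_def by auto
  have m1: "y1 < \<bar>g \<theta>0 - g t1\<bar>" and m2: "y1 < \<bar>g \<theta>0 - g t2\<bar>"
    using m unfolding mu_pair_def g_def by auto
  obtain d1 where d1: "d1 > 0" "\<And>x. \<bar>x - t1\<bar> < d1 \<Longrightarrow> \<bar>g x - g t1\<bar> < \<bar>g \<theta>0 - g t1\<bar> - y1"
    using cont_eps[OF gc, of "\<bar>g \<theta>0 - g t1\<bar> - y1" t1] m1 by auto
  obtain d2 where d2: "d2 > 0" "\<And>x. \<bar>x - t2\<bar> < d2 \<Longrightarrow> \<bar>g x - g t2\<bar> < \<bar>g \<theta>0 - g t2\<bar> - y1"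
    using cont_eps[OF gc, of "\<bar>g \<theta>0 - g t2\<bar> - y1" t2] m2 by auto
  define a where "a = t1 + min (d1/2) ((\<theta>0 - t1)/2)"
  define b where "b = t2 - min (d2/2) ((t2 - \<theta>0)/2)"
  have "0 < min (d1/2) ((\<theta>0 - t1)/2)" "min (d1/2) ((\<theta>0 - t1)/2) \<le> d1/2"
    "min (d1/2) ((\<theta>0 - t1)/2) \<le> (\<theta>0 - t1)/2" using d1 o by (auto simp: min_def)
  then have a: "t1 < a" "a < \<theta>0" "\<bar>a - t1\<bar> < d1" unfolding a_def using d1 o by auto
  have "0 < min (d2/2) ((t2 - \<theta>0)/2)" "min (d2/2) ((t2 - \<theta>0)/2) \<le> d2/2"
    "min (d2/2) ((t2 - \<theta>0)/2) \<le> (t2 - \<theta>0)/2" using d2 o by (auto simp: min_def)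
  then have b: "\<theta>0 < b" "b < t2" "\<bar>b - t2\<bar> < d2" unfolding b_def using d2 o by auto
  have ma: "y1 < \<bar>g \<theta>0 - g a\<bar>" using d1(2)[OF a(3)] by arith
  have mb: "y1 < \<bar>g \<theta>0 - g b\<bar>" using d2(2)[OF b(3)] by arith
  obtain d3 where d3: "d3 > 0" "\<And>x. \<bar>x - \<theta>0\<bar> < d3 \<Longrightarrow> \<bar>g x - g \<theta>0\<bar> < min (\<bar>g \<theta>0 - g a\<bar> - y1) (\<bar>g \<theta>0 - g b\<bar> - y1)"
    using cont_eps[OF gc, of "min (\<bar>g \<theta>0 - g a\<bar> - y1) (\<bar>g \<theta>0 - g b\<bar> - y1)" \<theta>0] ma mb by auto
  define r where "r = min d3 (min (a - t1) (min ((\<theta>0 - a)/2) (min ((b - \<theta>0)/2) (t2 - b))))"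
  have r: "r > 0" unfolding r_def using d3 a b by auto
  show ?thesis
  proof (intro exI[of _ r] conjI allI impI r)
    fix \<theta> assume th: "\<bar>\<theta> - \<theta>0\<bar> < r"
    have rb: "r \<le> d3" "r \<le> a - t1" "r \<le> (\<theta>0 - a)/2" "r \<le> (b - \<theta>0)/2" "r \<le> t2 - b"
      unfolding r_def by (auto simp: min_def)
    have thr: "\<theta>0 - r < \<theta>" "\<theta> < \<theta>0 + r" using th by arith+
    have ineq: "t1 + r \<le> a" "a + r \<le> \<theta>" "\<theta> + r \<le> b" "b + r \<le> t2"
      using thr rb by auto
    have "\<bar>g \<theta> - g \<theta>0\<bar> < min (\<bar>g \<theta>0 - g a\<bar> - y1) (\<bar>g \<theta>0 - g b\<bar> - y1)"
      using d3(2) th rb(1) by auto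
    then have q1: "y1 < \<bar>g \<theta> - g a\<bar>" and q2: "y1 < \<bar>g \<theta> - g b\<bar>" by arith+
    have "admissible \<gamma> \<theta> v t1 t2" using A ineq r unfolding admissible_def by auto
    then show "goodQ \<gamma> y1 \<theta> r" unfolding goodQ_def using ineq q1 q2 unfolding g_def by blast
  qed
qed

lemma goodQ_uniform:
  fixes \<gamma> :: "real \<Rightarrow> complex"
  assumes T: "T > 0" and p: "\<And>s. \<gamma> (s + T) = \<gamma> s"
    and loc: "\<And>\<theta>0. \<exists>r>0. \<forall>\<theta>. \<bar>\<theta> - \<theta>0\<bar> < r \<longrightarrow> goodQ \<gamma> y1 \<theta> r"
  shows "\<exists>\<eta>>0. \<forall>\<theta>. goodQ \<gamma> y1 \<theta> \<eta>"
proof -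
  obtain R where R: "\<And>\<theta>0. R \<theta>0 > 0" "\<And>\<theta>0 \<theta>. \<bar>\<theta> - \<theta>0\<bar> < R \<theta>0 \<Longrightarrow> goodQ \<gamma> y1 \<theta> (R \<theta>0)"
    using loc by metis
  have "{0..T} \<subseteq> (\<Union>c\<in>{0..T}. ball c (R c))" using R(1) by force
  then obtain C where C: "C \<subseteq> {0..T}" "finite C" "{0..T} \<subseteq> (\<Union>c\<in>C. ball c (R c))"
    using compactE_image[of "{0..T}" "{0..T}" "\<lambda>c. ball c (R c)"] by auto
  have Cne: "C \<noteq> {}" using C(3) T by auto
  define \<eta> where "\<eta> = Min (R ` C)"
  have \<eta>: "\<eta> > 0" unfolding \<eta>_def using C(2) Cne R(1) by (simp add: Min_gr_iff)
  have base: "goodQ \<gamma> y1 \<theta> \<eta>" if th: "\<theta> \<in> {0..T}" for \<theta>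
  proof -
    obtain c where c: "c \<in> C" "\<theta> \<in> ball c (R c)" using C(3) th by blast
    then have "\<bar>\<theta> - c\<bar> < R c" by (simp add: dist_real_def abs_minus_commute)
    then have "goodQ \<gamma> y1 \<theta> (R c)" by (rule R(2))
    moreover have "\<eta> \<le> R c" unfolding \<eta>_def using C(2) c(1) by simp
    ultimately show ?thesis by (rule goodQ_mono)
  qed
  have "goodQ \<gamma> y1 \<theta> \<eta>" for \<theta>
  proof -
    obtain k x' where x: "\<theta> = x' + real_of_int k * T" "x' \<in> {0..<T}" using per_reduce[OF T] by blast
    have "goodQ \<gamma> y1 x' \<eta>" using base x(2) by auto
    moreover have "\<gamma> (s + real_of_int k * T) = \<gamma> s" for s using per_int[of \<gamma> T s k] p by blast
    ultimately show ?thesis using goodQ_shift x(1) by metis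
  qed
  then show ?thesis using \<eta> by blast
qed

theorem lemma4p2:
  fixes \<gamma> :: "real \<Rightarrow> complex" and \<phi> :: "real \<Rightarrow> real"
  assumes "periodic_jordan_param \<gamma>"
    and "locally_monotone \<gamma>"
    and "smooth_fun \<phi>"
    and "\<And>x. \<phi> x \<ge> 0"
    and "\<And>x. \<bar>x\<bar> > 1 \<Longrightarrow> \<phi> x = 0"
    and "(\<phi> has_integral 1) UNIV"
  shows "Liminf (at_right 0) (\<lambda>\<epsilon>. lm_const (mollify \<phi> \<epsilon> \<gamma>)) \<ge> lm_const \<gamma>"
proof -
  note z = assms(5) and nn = assms(4) and i = assms(6)
  obtain T where T: "T > 0" "\<And>s. \<gamma> (s + T) = \<gamma> s" and c\<gamma>: "continuous_on UNIV \<gamma>"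
    using assms(1) unfolding periodic_jordan_param_def by blast
  have c\<phi>: "continuous_on UNIV \<phi>"
  proof -
    have "\<phi> differentiable (at x)" for x using assms(3) unfolding smooth_fun_def
      by (metis funpow_0)
    then have "isCont \<phi> x" for x by (simp add: differentiable_imp_continuous_within)
    then show ?thesis by (simp add: continuous_at_imp_continuous_on)
  qed
  show ?thesis unfolding le_Liminf_iff
  proof (intro allI impI)
    fix y assume y: "y < lm_const \<gamma>"
    obtain y0 where y0: "y < ereal y0" "ereal y0 < lm_const \<gamma>" using ereal_dense2[OF y] by blast
    obtain y1 where y1: "ereal y0 < ereal y1" "ereal y1 < lm_const \<gamma>" using ereal_dense2[OF y0(2)] by blast
    have y01: "y0 < y1" using y1(1) by simp
    have lt: "ereal y1 < mu_at \<gamma> \<theta>" for \<theta>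
      using y1(2) unfolding lm_const_def by (meson INF_lower UNIV_I less_le_trans)
    obtain \<eta> where \<eta>: "\<eta> > 0" "\<And>\<theta>. goodQ \<gamma> y1 \<theta> \<eta>"
      using goodQ_uniform[OF T goodQ_local[OF c\<gamma> lt]] by blast
    define \<delta> where "\<delta> = (y1 - y0) / 4"
    have \<delta>: "\<delta> > 0" unfolding \<delta>_def using y01 by simp
    obtain d where d: "d > 0" "\<And>x u. \<bar>u\<bar> \<le> d \<Longrightarrow> norm (\<gamma> (x - u) - \<gamma> x) < \<delta>"
      using unif_cont_periodic[OF c\<gamma> T \<delta>] by blast
    have ev: "eventually (\<lambda>\<epsilon>. \<epsilon> \<in> {0<..<min \<eta> d}) (at_right (0::real))"
      by (rule eventually_at_right_real) (use \<eta> d in simp)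
    show "eventually (\<lambda>\<epsilon>. y < lm_const (mollify \<phi> \<epsilon> \<gamma>)) (at_right 0)"
    proof (rule eventually_mono[OF ev])
      fix \<epsilon> :: real assume "\<epsilon> \<in> {0<..<min \<eta> d}"
      then have e: "\<epsilon> > 0" "\<epsilon> < \<eta>" "\<epsilon> < d" by auto
      define \<gamma>e where "\<gamma>e = mollify \<phi> \<epsilon> \<gamma>"
      have close: "\<bar>gproj \<gamma>e v s - gproj \<gamma> v s\<bar> \<le> \<delta>" if nv: "norm v = 1" for v s
      proof -
        have "norm (\<gamma>e s - \<gamma> s) \<le> \<delta>" unfolding \<gamma>e_def
          by (rule moll_est[OF c\<phi> z nn i e(1) c\<gamma>]) (use d e in auto)
        moreover have "\<bar>gproj \<gamma>e v s - gproj \<gamma> v s\<bar> \<le> norm (\<gamma>e s - \<gamma> s) * norm v"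
          unfolding gproj_def by (metis Cauchy_Schwarz_ineq2 inner_diff_left)
        ultimately show ?thesis using nv by simp
      qed
      have "ereal (y1 - 2 * \<delta>) \<le> lm_const \<gamma>e"
        unfolding lm_const_def
      proof (rule INF_greatest)
        fix \<theta> :: real
        obtain v t1 t2 a b where A: "admissible \<gamma> \<theta> v t1 t2" and
          B: "t1 + \<eta> \<le> a" "a + \<eta> \<le> \<theta>" "\<theta> + \<eta> \<le> b" "b + \<eta> \<le> t2"
          "y1 < \<bar>gproj \<gamma> v \<theta> - gproj \<gamma> v a\<bar>" "y1 < \<bar>gproj \<gamma> v \<theta> - gproj \<gamma> v b\<bar>"
          using \<eta>(2)[of \<theta>] unfolding goodQ_def by blast
        have sm: "strictly_monotone_on {t1<..<t2} (gproj \<gamma> v)" and nv: "norm v = 1"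
          using A unfolding admissible_def by auto
        have Ae: "admissible \<gamma>e \<theta> v (t1 + \<epsilon>) (t2 - \<epsilon>)"
          unfolding admissible_def \<gamma>e_def using moll_smono[OF c\<phi> z nn i e(1) c\<gamma> sm] nv B e by auto
        have f1: "\<bar>gproj \<gamma> v \<theta> - gproj \<gamma> v a\<bar> \<le> \<bar>gproj \<gamma> v \<theta> - gproj \<gamma> v (t1 + \<epsilon>)\<bar>"
          by (rule sm_far(1)[OF sm]) (use B e \<eta> in auto)
        have f2: "\<bar>gproj \<gamma> v \<theta> - gproj \<gamma> v b\<bar> \<le> \<bar>gproj \<gamma> v \<theta> - gproj \<gamma> v (t2 - \<epsilon>)\<bar>"
          by (rule sm_far(2)[OF sm]) (use B e \<eta> in auto)
        have c1: "\<bar>gproj \<gamma>e v \<theta> - gproj \<gamma> v \<theta>\<bar> \<le> \<delta>" by (rule close[OF nv])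
        have c2: "\<bar>gproj \<gamma>e v (t1 + \<epsilon>) - gproj \<gamma> v (t1 + \<epsilon>)\<bar> \<le> \<delta>" by (rule close[OF nv])
        have c3: "\<bar>gproj \<gamma>e v (t2 - \<epsilon>) - gproj \<gamma> v (t2 - \<epsilon>)\<bar> \<le> \<delta>" by (rule close[OF nv])
        have "y1 - 2 * \<delta> \<le> mu_pair \<gamma>e \<theta> v (t1 + \<epsilon>) (t2 - \<epsilon>)"
          unfolding mu_pair_def using f1 f2 c1 c2 c3 B(5,6) by arith
        then have "ereal (y1 - 2 * \<delta>) \<le> ereal (case (v, t1 + \<epsilon>, t2 - \<epsilon>) of (v, t1, t2) \<Rightarrow> mu_pair \<gamma>e \<theta> v t1 t2)"
          by simp
        moreover have "(v, t1 + \<epsilon>, t2 - \<epsilon>) \<in> {(v, t1, t2). admissible \<gamma>e \<theta> v t1 t2}" using Ae by simp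
        ultimately show "ereal (y1 - 2 * \<delta>) \<le> mu_at \<gamma>e \<theta>"
          unfolding mu_at_def by (meson SUP_upper2)
      qed
      moreover have "y0 < y1 - 2 * \<delta>" unfolding \<delta>_def using y01 by (simp add: field_simps)
      then have "ereal y0 < ereal (y1 - 2 * \<delta>)" by simp
      ultimately have "ereal y0 < lm_const \<gamma>e"
        using less_le_trans by blast
      then show "y < lm_const (mollify \<phi> \<epsilon> \<gamma>)" using y0(1) unfolding \<gamma>e_def by simp
    qed
  qed
qed

end
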